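(* There exists $n_0$ such that the following holds for all $n>n_0$. Let $r\ge25$ and let $A\subseteq S_n$ be a conjugacy class with $\mu(A)\ge e^{-n}$ such that every permutation in $A$ has at most $(r/2)^{\ell}$ cycles of length $\ell$, for every $\ell\ge1$. Then $A$ is $r$-global, i.e. for every $d\ge1$ and every $d$-umvirate $U_{I\to J}$ we have $\mu_{U_{I\to J}}(A)\le r^{d}\mu(A)$.
   Context: $\mu(A)=|A|/n!$. For distinct $i_1,\dots,i_d$ and distinct $j_1,\dots,j_d$ in $[n]$, with $I=(i_1,\dots,i_d)$, $J=(j_1,\dots,j_d)$, the $d$-umvirate $U_{I\to J}$ is the set of $\pi\in S_n$ with $\pi(i_k)=j_k$ for all $k$, and $\mu_{U}(A)=|A\cap U|/|U|$. *)

theory Defs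
  imports "HOL-Analysis.Analysis" "HOL-Combinatorics.Combinatorics"
begin

definition Sym :: "nat \<Rightarrow> (nat \<Rightarrow> nat) set" where
  "Sym n = {p. p permutes {..<n}}"

definition mu :: "nat \<Rightarrow> (nat \<Rightarrow> nat) set \<Rightarrow> real" where
  "mu n A = real (card A) / fact n"

definition conj_class :: "nat \<Rightarrow> (nat \<Rightarrow> nat) set \<Rightarrow> bool" where
  "conj_class n A \<longleftrightarrow> (\<exists>p \<in> Sym n. A = {s \<circ> p \<circ> inv s | s. s \<in> Sym n})"

definition num_cycles :: "nat \<Rightarrow> (nat \<Rightarrow> nat) \<Rightarrow> nat \<Rightarrow> nat" where
  "num_cycles n p l = card {C. \<exists>x \<in> {..<n}. C = orbit p x \<and> card C = l}"

definition umvirate :: "nat \<Rightarrow> nat list \<Rightarrow> nat list \<Rightarrow> (nat \<Rightarrow> nat) set" where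
  "umvirate n I J = {p \<in> Sym n. \<forall>k < length I. p (I ! k) = J ! k}"

definition is_umvirate_index :: "nat \<Rightarrow> nat \<Rightarrow> nat list \<Rightarrow> nat list \<Rightarrow> bool" where
  "is_umvirate_index n d I J \<longleftrightarrow> length I = d \<and> length J = d \<and> distinct I \<and> distinct J
     \<and> set I \<subseteq> {..<n} \<and> set J \<subseteq> {..<n}"

definition mu_U :: "nat \<Rightarrow> nat list \<Rightarrow> nat list \<Rightarrow> (nat \<Rightarrow> nat) set \<Rightarrow> real" where
  "mu_U n I J A = real (card (A \<inter> umvirate n I J)) / real (card (umvirate n I J))"

definition r_global :: "nat \<Rightarrow> real \<Rightarrow> (nat \<Rightarrow> nat) set \<Rightarrow> bool" where
  "r_global n r A \<longleftrightarrow> (\<forall>d \<ge> 1. \<forall>I J. is_umvirate_index n d I J \<longrightarrow>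
      mu_U n I J A \<le> r ^ d * mu n A)"

end

theory Submission
  imports Defs
begin

lemma ext_count:
  assumes S: "S \<subseteq> {..<n}" and inj: "inj_on \<phi> S" and im: "\<phi> ` S \<subseteq> {..<n}"
  shows "card {\<rho> \<in> Sym n. \<forall>x\<in>S. \<rho> x = \<phi> x} = fact (n - card S)"
proof -
  have fS: "finite S" using S finite_subset by blast
  have cS: "card (\<phi> ` S) = card S" using inj card_image by blast
  have c1: "card ({..<n} - S) = n - card S" using S fS by (simp add: card_Diff_subset)
  have c2: "card ({..<n} - \<phi> ` S) = n - card S" using im fS cS by (simp add: card_Diff_subset)
  obtain h where h: "bij_betw h ({..<n} - S) ({..<n} - \<phi> ` S)"
    using finite_same_card_bij[of "{..<n} - S" "{..<n} - \<phi> ` S"] c1 c2 by auto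
  define \<rho>0 where "\<rho>0 = (\<lambda>x. if x \<in> S then \<phi> x else if x < n then h x else x)"
  have b1: "bij_betw \<rho>0 S (\<phi> ` S)"
    using inj unfolding bij_betw_def \<rho>0_def by (auto simp: inj_on_def image_def)
  have b2: "bij_betw \<rho>0 ({..<n} - S) ({..<n} - \<phi> ` S)"
    using h by (rule bij_betw_cong[THEN iffD1, rotated]) (auto simp: \<rho>0_def)
  have "bij_betw \<rho>0 (S \<union> ({..<n} - S)) (\<phi> ` S \<union> ({..<n} - \<phi> ` S))"
    by (rule bij_betw_combine[OF b1 b2]) auto
  moreover have "S \<union> ({..<n} - S) = {..<n}" "\<phi> ` S \<union> ({..<n} - \<phi> ` S) = {..<n}"
    using S im by auto
  ultimately have b: "bij_betw \<rho>0 {..<n} {..<n}" by simp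
  have p0: "\<rho>0 permutes {..<n}"
    by (rule bij_imp_permutes[OF b]) (use S in \<open>auto simp: \<rho>0_def\<close>)
  have eq: "{\<rho> \<in> Sym n. \<forall>x\<in>S. \<rho> x = \<phi> x} = (\<lambda>\<sigma>. \<rho>0 \<circ> \<sigma>) ` {\<sigma>. \<sigma> permutes ({..<n} - S)}"
  proof (intro set_eqI iffI)
    fix \<rho> assume "\<rho> \<in> {\<rho> \<in> Sym n. \<forall>x\<in>S. \<rho> x = \<phi> x}"
    then have r: "\<rho> permutes {..<n}" "\<forall>x\<in>S. \<rho> x = \<phi> x" by (auto simp: Sym_def)
    define \<sigma> where "\<sigma> = inv \<rho>0 \<circ> \<rho>"
    have sp: "\<sigma> permutes {..<n}" unfolding \<sigma>_def
      by (rule permutes_compose[OF r(1) permutes_inv[OF p0]])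
    have fx: "\<sigma> x = x" if "x \<in> S" for x
    proof -
      have "\<rho> x = \<rho>0 x" using r(2) that by (simp add: \<rho>0_def)
      then show ?thesis using permutes_inverses(2)[OF p0, of x] by (simp add: \<sigma>_def)
    qed
    have "\<sigma> permutes ({..<n} - S)"
      using sp fx unfolding permutes_def by (metis Diff_iff)
    moreover have "\<rho> = \<rho>0 \<circ> \<sigma>"
      unfolding \<sigma>_def using permutes_inverses(1)[OF p0] by (auto simp: fun_eq_iff)
    ultimately show "\<rho> \<in> (\<lambda>\<sigma>. \<rho>0 \<circ> \<sigma>) ` {\<sigma>. \<sigma> permutes ({..<n} - S)}" by blast
  next
    fix \<rho> assume "\<rho> \<in> (\<lambda>\<sigma>. \<rho>0 \<circ> \<sigma>) ` {\<sigma>. \<sigma> permutes ({..<n} - S)}"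
    then obtain \<sigma> where s: "\<sigma> permutes ({..<n} - S)" "\<rho> = \<rho>0 \<circ> \<sigma>" by blast
    have "\<sigma> permutes {..<n}" using s(1) permutes_subset by blast
    then have "\<rho> permutes {..<n}" using s(2) permutes_compose p0 by blast
    moreover have "\<forall>x\<in>S. \<rho> x = \<phi> x"
      using s permutes_not_in by (fastforce simp: \<rho>0_def)
    ultimately show "\<rho> \<in> {\<rho> \<in> Sym n. \<forall>x\<in>S. \<rho> x = \<phi> x}" by (simp add: Sym_def)
  qed
  have injc: "inj_on (\<lambda>\<sigma>. \<rho>0 \<circ> \<sigma>) {\<sigma>. \<sigma> permutes ({..<n} - S)}"
  proof (rule inj_onI)
    fix a b assume "\<rho>0 \<circ> a = \<rho>0 \<circ> b"
    then have "inv \<rho>0 \<circ> (\<rho>0 \<circ> a) = inv \<rho>0 \<circ> (\<rho>0 \<circ> b)" by simp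
    then show "a = b" using permutes_inverses(2)[OF p0] by (simp add: fun_eq_iff)
  qed
  show ?thesis unfolding eq card_image[OF injc]
    by (rule card_permutations) (auto simp: c1)
qed

definition Phi :: "nat \<Rightarrow> (nat \<Rightarrow> nat) \<Rightarrow> nat set \<Rightarrow> (nat \<Rightarrow> nat) \<Rightarrow> (nat \<Rightarrow> nat) set" where
  "Phi n p D f = {\<phi> \<in> (D \<union> f ` D) \<rightarrow>\<^sub>E {..<n}. inj_on \<phi> (D \<union> f ` D) \<and> (\<forall>x\<in>D. p (\<phi> x) = \<phi> (f x))}"

lemma Phi_finite: "finite D \<Longrightarrow> finite (Phi n p D f)"
  unfolding Phi_def by (rule finite_subset[of _ "(D \<union> f ` D) \<rightarrow>\<^sub>E {..<n}"]) (auto intro: finite_PiE)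

lemma Phi_restrict:
  assumes "\<phi> \<in> Phi n p D f" "D' \<subseteq> D"
  shows "restrict \<phi> (D' \<union> f ` D') \<in> Phi n p D' f"
proof -
  have sub: "D' \<union> f ` D' \<subseteq> D \<union> f ` D" using assms(2) by auto
  have i: "inj_on \<phi> (D' \<union> f ` D')" using assms(1) sub unfolding Phi_def by (metis (no_types, lifting) mem_Collect_eq inj_on_subset)
  have c: "\<forall>x\<in>D'. p (\<phi> x) = \<phi> (f x)" using assms unfolding Phi_def by auto
  have "restrict \<phi> (D' \<union> f ` D') \<in> (D' \<union> f ` D') \<rightarrow>\<^sub>E {..<n}"
    using assms(1) sub unfolding Phi_def by (auto simp: PiE_iff)
  moreover have "inj_on (restrict \<phi> (D' \<union> f ` D')) (D' \<union> f ` D')"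
    using i by (simp add: inj_on_def)
  ultimately show ?thesis using c unfolding Phi_def by auto
qed

lemma Phi_eq:
  assumes "\<phi> \<in> Phi n p D f" "\<psi> \<in> Phi n p D f" "\<And>z. z \<in> D \<union> f ` D \<Longrightarrow> \<phi> z = \<psi> z"
  shows "\<phi> = \<psi>"
  using assms unfolding Phi_def by (auto intro: PiE_ext)

lemma claim_caseA:
  fixes r :: real
  assumes r: "r \<ge> 1" and fin: "finite D" and inj: "inj_on f D"
    and a: "a \<in> D" "f a \<notin> D"
    and IH: "real (card (Phi n p (D - {a}) f)) * r ^ (card ((D - {a}) \<union> f ` (D - {a})) - card (D - {a}))
             \<le> real n ^ (card ((D - {a}) \<union> f ` (D - {a})) - card (D - {a})) * r ^ card (D - {a})"
  shows "real (card (Phi n p D f)) * r ^ (card (D \<union> f ` D) - card D)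
             \<le> real n ^ (card (D \<union> f ` D) - card D) * r ^ card D"
proof -
  define D' where "D' = D - {a}"
  define S' where "S' = D' \<union> f ` D'"
  have fS': "finite S'" using fin by (simp add: S'_def D'_def)
  have faS': "f a \<notin> S'"
  proof
    assume "f a \<in> S'"
    then obtain y where "y \<in> D'" "f a = f y" using a(2) by (auto simp: S'_def D'_def)
    then show False using inj a(1) by (auto simp: D'_def inj_on_def)
  qed
  have Seq: "D \<union> f ` D = insert a (insert (f a) S')" using a(1) by (auto simp: S'_def D'_def)
  have cD: "card D = Suc (card D')" using fin a(1) unfolding D'_def by (metis card_Suc_Diff1)
  have le': "card D' \<le> card S'" using fS' by (auto simp: S'_def intro: card_mono)
  have aneq: "a \<noteq> f a" using a by auto
  have finP': "finite (Phi n p D' f)" using fin by (simp add: Phi_finite D'_def)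
  have restr: "restrict \<phi> S' \<in> Phi n p D' f" if "\<phi> \<in> Phi n p D f" for \<phi>
    using Phi_restrict[OF that, of D'] by (auto simp: S'_def D'_def)
  have key: "\<phi> = \<psi>" if "\<phi> \<in> Phi n p D f" "\<psi> \<in> Phi n p D f" "restrict \<phi> S' = restrict \<psi> S'" "\<phi> a = \<psi> a"
    for \<phi> \<psi>
  proof (rule Phi_eq[OF that(1,2)])
    fix z assume z: "z \<in> D \<union> f ` D"
    have "p (\<phi> a) = \<phi> (f a)" "p (\<psi> a) = \<psi> (f a)" using that(1,2) a(1) by (auto simp: Phi_def)
    moreover have "\<phi> z = \<psi> z" if "z \<in> S'" using \<open>restrict \<phi> S' = restrict \<psi> S'\<close> that
      by (metis restrict_apply')
    ultimately show "\<phi> z = \<psi> z" using z Seq that(4) by auto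
  qed
  show ?thesis
  proof (cases "a \<in> S'")
    case True
    have cS: "card (D \<union> f ` D) = Suc (card S')"
      unfolding Seq using True faS' fS' by (simp add: insert_absorb)
    have "inj_on (\<lambda>\<phi>. restrict \<phi> S') (Phi n p D f)"
    proof (rule inj_onI)
      fix \<phi> \<psi> assume h: "\<phi> \<in> Phi n p D f" "\<psi> \<in> Phi n p D f" "restrict \<phi> S' = restrict \<psi> S'"
      then have "\<phi> a = \<psi> a" using True by (metis restrict_apply')
      then show "\<phi> = \<psi>" using key h by blast
    qed
    then have "card (Phi n p D f) \<le> card (Phi n p D' f)"
      using card_inj_on_le[OF _ _ finP'] restr by blast
    then have "real (card (Phi n p D f)) * r ^ (card (D \<union> f ` D) - card D)
       \<le> real (card (Phi n p D' f)) * r ^ (card S' - card D')"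
      using cS cD r by (simp add: mult_right_mono)
    also have "\<dots> \<le> real n ^ (card S' - card D') * r ^ card D'"
      using IH by (simp add: S'_def D'_def)
    also have "\<dots> \<le> real n ^ (card (D \<union> f ` D) - card D) * r ^ card D"
      using cS cD r by (simp add: mult_left_mono)
    finally show ?thesis .
  next
    case False
    have cS: "card (D \<union> f ` D) = Suc (Suc (card S'))"
      unfolding Seq using False faS' fS' aneq by simp
    have "inj_on (\<lambda>\<phi>. (restrict \<phi> S', \<phi> a)) (Phi n p D f)"
      by (rule inj_onI) (use key in blast)
    moreover have "(\<lambda>\<phi>. (restrict \<phi> S', \<phi> a)) ` Phi n p D f \<subseteq> Phi n p D' f \<times> {..<n}"
      using restr a(1) by (auto simp: Phi_def PiE_iff)
    ultimately have "card (Phi n p D f) \<le> card (Phi n p D' f \<times> {..<n})"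
      using card_inj_on_le finP' by blast
    then have cP: "real (card (Phi n p D f)) \<le> real (card (Phi n p D' f)) * real n"
      by (simp add: card_cartesian_product) (metis of_nat_le_iff of_nat_mult)
    have e: "card (D \<union> f ` D) - card D = Suc (card S' - card D')" using cS cD le' by simp
    have "real (card (Phi n p D f)) * r ^ (card (D \<union> f ` D) - card D)
       \<le> real (card (Phi n p D' f)) * real n * r ^ (card (D \<union> f ` D) - card D)"
      using cP r by (simp add: mult_right_mono)
    also have "\<dots> = (real (card (Phi n p D' f)) * r ^ (card S' - card D')) * (real n * r)"
      unfolding e by (simp add: algebra_simps)
    also have "\<dots> \<le> (real n ^ (card S' - card D') * r ^ card D') * (real n * r)"
      using IH r by (intro mult_right_mono) (auto simp: S'_def D'_def)
    also have "\<dots> = real n ^ (Suc (card S' - card D')) * r ^ Suc (card D')"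
      by (simp add: algebra_simps)
    also have "\<dots> = real n ^ (card (D \<union> f ` D) - card D) * r ^ card D"
      using e cD by metis
    finally show ?thesis .
  qed
qed

lemma claim_caseB:
  fixes r :: real
  assumes p: "p permutes {..<n}" and r: "r \<ge> 1"
    and cyc: "\<forall>l\<ge>1. real (num_cycles n p l) \<le> (r/2)^l"
    and fin: "finite D" and inj: "inj_on f D" and cl: "\<forall>a\<in>D. f a \<in> D" and x: "x \<in> D"
  obtains C where "C \<subseteq> D" "x \<in> C" "f ` (D - C) \<subseteq> D - C"
    "real (card (Phi n p D f)) \<le> real (card (Phi n p (D - C) f)) * r ^ card C"
proof -
  have fD: "f ` D = D" using endo_inj_surj[OF fin _ inj] cl by auto
  define g where "g = (\<lambda>y. if y \<in> D then f y else y)"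
  have "bij_betw g D D" unfolding bij_betw_def
  proof
    show "inj_on g D" using inj by (auto simp: inj_on_def g_def)
    show "g ` D = D" using fD by (auto simp: g_def image_def)
  qed
  then have gp: "g permutes D" by (rule bij_imp_permutes) (simp add: g_def)
  have perm: "permutation g" using gp fin permutation_permutes by blast
  define C where "C = orbit g x"
  have CD: "C \<subseteq> D" unfolding C_def by (rule permutes_orbit_subset[OF gp x])
  have xC: "x \<in> C" unfolding C_def by (rule permutation_self_in_orbit[OF perm])
  have finC: "finite C" using CD fin finite_subset by blast
  have Calt: "C = {(g ^^ k) x | k. True}" unfolding C_def by (rule orbit_altdef_permutation[OF perm])
  have gkD: "(g ^^ k) x \<in> D" for k using Calt CD by blast
  have bk: "y \<in> C" if "y \<in> D" "g y \<in> C" for y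
  proof -
    have "inv g (g y) \<in> orbit (inv g) x" using that(2) orbit_inv_eq[OF perm]
      by (metis C_def orbit.step)
    then show ?thesis using orbit_inv_eq[OF perm] permutes_inverses(2)[OF gp] by (simp add: C_def)
  qed
  have cl': "f ` (D - C) \<subseteq> D - C"
  proof
    fix z assume "z \<in> f ` (D - C)"
    then obtain y where y: "y \<in> D - C" "z = f y" by blast
    have "g y = f y" using y by (simp add: g_def)
    then show "z \<in> D - C" using y bk cl by auto
  qed
  define D' where "D' = D - C"
  have S'eq: "D' \<union> f ` D' = D'" using cl' by (auto simp: D'_def)
  have Seq: "D \<union> f ` D = D" using fD by auto
  define m where "m = card C"
  have m1: "m \<ge> 1" using xC finC by (auto simp: m_def Suc_le_eq card_gt_0_iff)
  define Cs where "Cs = {Cc. \<exists>y\<in>{..<n}. Cc = orbit p y \<and> card Cc = m}"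
  define Y where "Y = \<Union> Cs"
  have pperm: "permutation p" using p permutation_permutes by blast
  have YS: "Y \<subseteq> {..<n}" unfolding Y_def Cs_def using permutes_orbit_subset[OF p] by blast
  have finY: "finite Y" using YS finite_subset by blast
  have "card Y \<le> sum card Cs" unfolding Y_def by (rule card_Union_le_sum_card)
  also have "sum card Cs = m * card Cs" unfolding Cs_def by simp
  also have "card Cs = num_cycles n p m" unfolding Cs_def num_cycles_def by simp
  finally have cY: "real (card Y) \<le> real m * (r/2)^m"
    using cyc m1 by (metis (no_types, opaque_lifting) mult_left_mono of_nat_0_le_iff of_nat_le_iff of_nat_mult order_trans)
  have "real m \<le> 2 ^ m" using less_exp[of m] by (metis less_imp_le of_nat_le_iff of_nat_numeral of_nat_power)
  then have "real m * (r/2)^m \<le> 2^m * (r/2)^m" using r by (intro mult_right_mono) auto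
  also have "\<dots> = r ^ m" by (simp add: power_mult_distrib[symmetric])
  finally have cY2: "real (card Y) \<le> r ^ m" using cY by linarith
  have iter: "\<phi> ((g ^^ k) x) = (p ^^ k) (\<phi> x)" if "\<phi> \<in> Phi n p D f" for \<phi> k
  proof (induction k)
    case (Suc k)
    have "(g ^^ Suc k) x = f ((g ^^ k) x)" using gkD by (simp add: g_def)
    moreover have "\<phi> (f ((g ^^ k) x)) = p (\<phi> ((g ^^ k) x))" using that gkD[of k] by (auto simp: Phi_def)
    ultimately show ?case using Suc by simp
  qed simp
  have finP': "finite (Phi n p D' f)" using fin by (simp add: Phi_finite D'_def)
  have inj\<Psi>: "inj_on (\<lambda>\<phi>. (restrict \<phi> D', \<phi> x)) (Phi n p D f)"
  proof (rule inj_onI)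
    fix \<phi> \<psi> assume h: "\<phi> \<in> Phi n p D f" "\<psi> \<in> Phi n p D f"
      "(restrict \<phi> D', \<phi> x) = (restrict \<psi> D', \<psi> x)"
    show "\<phi> = \<psi>"
    proof (rule Phi_eq[OF h(1,2)])
      fix z assume "z \<in> D \<union> f ` D"
      then have z: "z \<in> D" using Seq by auto
      show "\<phi> z = \<psi> z"
      proof (cases "z \<in> C")
        case True
        then obtain k where "z = (g ^^ k) x" using Calt by blast
        then show ?thesis using iter[OF h(1)] iter[OF h(2)] h(3) by simp
      next
        case False
        then have "z \<in> D'" using z by (simp add: D'_def)
        then show ?thesis using h(3) by (metis Pair_inject restrict_apply')
      qed
    qed
  qed
  have im: "(\<lambda>\<phi>. (restrict \<phi> D', \<phi> x)) ` Phi n p D f \<subseteq> Phi n p D' f \<times> Y"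
  proof
    fix w assume "w \<in> (\<lambda>\<phi>. (restrict \<phi> D', \<phi> x)) ` Phi n p D f"
    then obtain \<phi> where ph: "\<phi> \<in> Phi n p D f" "w = (restrict \<phi> D', \<phi> x)" by blast
    have "restrict \<phi> D' \<in> Phi n p D' f"
      using Phi_restrict[OF ph(1), of D'] S'eq by (simp add: D'_def)
    moreover have "\<phi> x \<in> Y"
    proof -
      have xn: "\<phi> x \<in> {..<n}" using ph(1) x by (auto simp: Phi_def PiE_iff)
      have "orbit p (\<phi> x) = {(p ^^ k) (\<phi> x) | k. True}" by (rule orbit_altdef_permutation[OF pperm])
      also have "\<dots> = \<phi> ` C" unfolding Calt
      proof (intro set_eqI iffI)
        fix z assume "z \<in> {(p ^^ k) (\<phi> x) | k. True}"
        then obtain k where "z = (p ^^ k) (\<phi> x)" by blast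
        then have "z = \<phi> ((g ^^ k) x)" using iter[OF ph(1)] by simp
        then show "z \<in> \<phi> ` {(g ^^ k) x | k. True}" by blast
      qed (use iter[OF ph(1)] in auto)
      finally have oe: "orbit p (\<phi> x) = \<phi> ` C" .
      have "inj_on \<phi> C" using ph(1) CD unfolding Phi_def using Seq
        by (metis (no_types, lifting) inj_on_subset mem_Collect_eq)
      then have "card (orbit p (\<phi> x)) = m" unfolding oe m_def by (rule card_image)
      then have "orbit p (\<phi> x) \<in> Cs" using xn by (auto simp: Cs_def)
      moreover have "\<phi> x \<in> orbit p (\<phi> x)" by (rule permutation_self_in_orbit[OF pperm])
      ultimately show ?thesis unfolding Y_def by blast
    qed
    ultimately show "w \<in> Phi n p D' f \<times> Y" using ph(2) by simp
  qed
  have "card (Phi n p D f) \<le> card (Phi n p D' f \<times> Y)"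
    using card_inj_on_le[OF inj\<Psi> im] finP' finY by blast
  then have "real (card (Phi n p D f)) \<le> real (card (Phi n p D' f)) * real (card Y)"
    by (simp add: card_cartesian_product) (metis of_nat_le_iff of_nat_mult)
  also have "\<dots> \<le> real (card (Phi n p D' f)) * r ^ m" using cY2 by (intro mult_left_mono) auto
  finally show ?thesis using that CD xC cl' by (simp add: D'_def m_def)
qed

lemma claim:
  fixes r :: real
  assumes p: "p permutes {..<n}" and r: "r \<ge> 1"
    and cyc: "\<forall>l\<ge>1. real (num_cycles n p l) \<le> (r/2)^l"
  shows "finite D \<Longrightarrow> inj_on f D \<Longrightarrow> real (card (Phi n p D f)) * r ^ (card (D \<union> f ` D) - card D)
             \<le> real n ^ (card (D \<union> f ` D) - card D) * r ^ card D"
proof (induction "card D" arbitrary: D rule: less_induct)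
  case less
  show ?case
  proof (cases "\<exists>a\<in>D. f a \<notin> D")
    case True
    then obtain a where a: "a \<in> D" "f a \<notin> D" by blast
    have lt: "card (D - {a}) < card D" using a(1) less.prems(1) by (rule card_Diff1_less[rotated])
    have ij: "inj_on f (D - {a})" using less.prems(2) by (rule inj_on_subset) auto
    have fi: "finite (D - {a})" using less.prems(1) by simp
    have IH: "real (card (Phi n p (D - {a}) f)) * r ^ (card ((D - {a}) \<union> f ` (D - {a})) - card (D - {a}))
             \<le> real n ^ (card ((D - {a}) \<union> f ` (D - {a})) - card (D - {a})) * r ^ card (D - {a})"
      by (rule less.hyps[OF lt fi ij])
    show ?thesis by (rule claim_caseA[OF r less.prems a IH])
  next
    case False
    then have cl: "\<forall>a\<in>D. f a \<in> D" by blast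
    then have Seq: "D \<union> f ` D = D" by auto
    show ?thesis
    proof (cases "D = {}")
      case True
      have "Phi n p D f \<subseteq> {\<lambda>x. undefined}" using True by (auto simp: Phi_def)
      then have "card (Phi n p D f) \<le> card {\<lambda>x::nat. undefined::nat}" by (intro card_mono) auto
      then have "card (Phi n p D f) \<le> 1" by simp
      then show ?thesis using True by simp
    next
      case False
      then obtain x where x: "x \<in> D" by blast
      obtain C where C: "C \<subseteq> D" "x \<in> C" "f ` (D - C) \<subseteq> D - C"
        "real (card (Phi n p D f)) \<le> real (card (Phi n p (D - C) f)) * r ^ card C"
        using claim_caseB[OF p r cyc less.prems cl x] by blast
      have "D - C \<subset> D" using C(1,2) by blast
      then have lt: "card (D - C) < card D" using less.prems(1) by (rule psubset_card_mono[rotated])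
      have S'eq: "(D - C) \<union> f ` (D - C) = D - C" using C(3) by auto
      have IH: "real (card (Phi n p (D - C) f)) * r ^ 0 \<le> real n ^ 0 * r ^ card (D - C)"
      proof -
        have ij: "inj_on f (D - C)" using less.prems(2) by (rule inj_on_subset) auto
        have fi: "finite (D - C)" using less.prems(1) by simp
        show ?thesis using less.hyps[OF lt fi ij] unfolding S'eq by simp
      qed
      have cD: "card D = card (D - C) + card C"
      proof -
        have "finite C" using C(1) less.prems(1) finite_subset by blast
        then have "card (D - C) = card D - card C" using C(1) by (rule card_Diff_subset)
        moreover have "card C \<le> card D" using C(1) less.prems(1) by (rule card_mono[rotated])
        ultimately show ?thesis by simp
      qed
      have "real (card (Phi n p D f)) \<le> r ^ card (D - C) * r ^ card C"
      proof -
        have "real (card (Phi n p (D - C) f)) * r ^ card C \<le> r ^ card (D - C) * r ^ card C"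
          using IH r by (intro mult_right_mono) auto
        then show ?thesis using C(4) by linarith
      qed
      then show ?thesis unfolding Seq using cD by (simp add: power_add)
    qed
  qed
qed

lemma Sym_finite: "finite (Sym n)"
  unfolding Sym_def using finite_permutations[of "{..<n}"] by simp

lemma card_Sym: "card (Sym n) = fact n"
  unfolding Sym_def using card_permutations[of "{..<n}" n] by simp

lemma Sym_bij: "s \<in> Sym n \<Longrightarrow> bij s"
  unfolding Sym_def by (simp add: permutes_bij)

lemma Sym_comp: "s \<in> Sym n \<Longrightarrow> t \<in> Sym n \<Longrightarrow> s \<circ> t \<in> Sym n"
  unfolding Sym_def by (simp add: permutes_compose)

lemma Sym_inv: "s \<in> Sym n \<Longrightarrow> inv s \<in> Sym n"
  unfolding Sym_def by (simp add: permutes_inv)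

lemma conj_cancel:
  assumes "bij t" "t \<circ> x \<circ> inv t = t \<circ> y \<circ> inv t"
  shows "x = y"
proof
  fix w
  have "t (x (inv t (t w))) = t (y (inv t (t w)))" using assms(2) by (metis comp_apply)
  then show "x w = y w" using assms(1) by (simp add: bij_is_inj inv_f_f inj_eq)
qed

lemma conj_comp:
  assumes "bij t" "bij s"
  shows "(t \<circ> s) \<circ> p \<circ> inv (t \<circ> s) = t \<circ> (s \<circ> p \<circ> inv s) \<circ> inv t"
  using assms by (simp add: o_inv_distrib o_assoc)

lemma fiber_count:
  assumes p: "p \<in> Sym n" and X: "X \<subseteq> {s \<circ> p \<circ> inv s | s. s \<in> Sym n}"
  shows "card X * card {\<tau> \<in> Sym n. \<tau> \<circ> p \<circ> inv \<tau> = p} = card {\<tau> \<in> Sym n. \<tau> \<circ> p \<circ> inv \<tau> \<in> X}"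
proof -
  define Z where "Z = {\<tau> \<in> Sym n. \<tau> \<circ> p \<circ> inv \<tau> = p}"
  define F where "F a = {\<tau> \<in> Sym n. \<tau> \<circ> p \<circ> inv \<tau> = a}" for a
  have finX: "finite X"
  proof -
    have "X \<subseteq> (\<lambda>s. s \<circ> p \<circ> inv s) ` Sym n" using X by blast
    then show ?thesis using Sym_finite finite_surj by blast
  qed
  have eq: "{\<tau> \<in> Sym n. \<tau> \<circ> p \<circ> inv \<tau> \<in> X} = (\<Union>a\<in>X. F a)" by (auto simp: F_def)
  have cF: "card (F a) = card Z" if a: "a \<in> X" for a
  proof -
    obtain t where t: "t \<in> Sym n" "a = t \<circ> p \<circ> inv t" using a X by blast
    have bt: "bij t" using t(1) Sym_bij by blast
    have "F a = (\<lambda>\<sigma>. t \<circ> \<sigma>) ` Z"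
    proof (intro set_eqI iffI)
      fix \<tau> assume "\<tau> \<in> F a"
      then have \<tau>: "\<tau> \<in> Sym n" "\<tau> \<circ> p \<circ> inv \<tau> = a" by (auto simp: F_def)
      define \<sigma> where "\<sigma> = inv t \<circ> \<tau>"
      have s: "\<sigma> \<in> Sym n" unfolding \<sigma>_def using \<tau>(1) t(1) Sym_inv Sym_comp by blast
      have te: "\<tau> = t \<circ> \<sigma>" unfolding \<sigma>_def using bt by (simp add: fun_eq_iff bij_is_surj surj_f_inv_f)
      have "t \<circ> (\<sigma> \<circ> p \<circ> inv \<sigma>) \<circ> inv t = t \<circ> p \<circ> inv t"
        using \<tau>(2) t(2) te conj_comp[OF bt Sym_bij[OF s]] by simp
      then have "\<sigma> \<circ> p \<circ> inv \<sigma> = p" by (rule conj_cancel[OF bt])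
      then show "\<tau> \<in> (\<lambda>\<sigma>. t \<circ> \<sigma>) ` Z" using te s by (auto simp: Z_def)
    next
      fix \<tau> assume "\<tau> \<in> (\<lambda>\<sigma>. t \<circ> \<sigma>) ` Z"
      then obtain \<sigma> where s: "\<sigma> \<in> Sym n" "\<sigma> \<circ> p \<circ> inv \<sigma> = p" "\<tau> = t \<circ> \<sigma>" by (auto simp: Z_def)
      have "\<tau> \<circ> p \<circ> inv \<tau> = a" using s t conj_comp[OF bt Sym_bij[OF s(1)]] by simp
      then show "\<tau> \<in> F a" using s(1,3) t(1) Sym_comp by (auto simp: F_def)
    qed
    moreover have "inj_on (\<lambda>\<sigma>. t \<circ> \<sigma>) Z"
      by (rule inj_onI) (metis bt bij_is_inj fun.map_comp inv_o_cancel id_comp)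
    ultimately show ?thesis by (simp add: card_image)
  qed
  have "card {\<tau> \<in> Sym n. \<tau> \<circ> p \<circ> inv \<tau> \<in> X} = (\<Sum>a\<in>X. card (F a))"
    unfolding eq
  proof (rule card_UN_disjoint[OF finX])
    show "\<forall>i\<in>X. finite (F i)" using Sym_finite by (auto simp: F_def)
    show "\<forall>i\<in>X. \<forall>j\<in>X. i \<noteq> j \<longrightarrow> F i \<inter> F j = {}" by (auto simp: F_def)
  qed
  also have "\<dots> = card X * card Z" using cF by simp
  finally show ?thesis by (simp add: Z_def)
qed

lemma arith_fact:
  fixes r :: real
  assumes r: "r \<ge> 25"
  shows "5 * (d + i) \<le> 4 * n \<Longrightarrow> real n ^ i * fact (n - (d + i)) \<le> r ^ i * fact (n - d)"
proof (induction i)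
  case 0 then show ?case by simp
next
  case (Suc i)
  have lt: "d + i < n" using Suc.prems by (simp add: algebra_simps)
  have IH: "real n ^ i * fact (n - (d + i)) \<le> r ^ i * fact (n - d)" using Suc by simp
  have fe: "fact (n - (d + i)) = real (n - (d + i)) * fact (n - (d + Suc i))"
  proof -
    have "n - (d + i) = Suc (n - (d + Suc i))" using lt by simp
    then show ?thesis by (metis fact_Suc of_nat_fact of_nat_mult)
  qed
  have "real n \<le> r * real (n - (d + i))"
  proof -
    have "5 * (d + i) + 5 \<le> 4 * n" using Suc.prems by (simp add: algebra_simps)
    then have "5 * n \<le> 25 * (n - (d + i))" using lt by presburger
    then have "5 * real n \<le> 25 * real (n - (d + i))" by (metis of_nat_le_iff of_nat_mult of_nat_numeral)
    then have "real n \<le> 25 * real (n - (d + i))" by linarith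
    also have "\<dots> \<le> r * real (n - (d + i))" using r by (intro mult_right_mono) auto
    finally show ?thesis .
  qed
  then have "real n * fact (n - (d + Suc i)) \<le> r * real (n - (d + i)) * fact (n - (d + Suc i))"
    by (intro mult_right_mono) auto
  then have "real n * fact (n - (d + Suc i)) \<le> r * fact (n - (d + i))" using fe by simp
  then have "real n ^ i * (real n * fact (n - (d + Suc i))) \<le> real n ^ i * (r * fact (n - (d + i)))"
    by (intro mult_left_mono) auto
  also have "\<dots> = r * (real n ^ i * fact (n - (d + i)))" by simp
  also have "\<dots> \<le> r * (r ^ i * fact (n - d))" using IH r by (intro mult_left_mono) auto
  finally show ?case by (simp add: algebra_simps)
qed

lemma exp_le_25:
  assumes "2 * n \<le> 5 * d"
  shows "exp (real n) \<le> 25 ^ d"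
proof -
  have "exp (real n) ^ 2 = exp (real (2 * n))" by (simp add: exp_of_nat_mult[symmetric] mult.commute)
  also have "\<dots> \<le> exp (real (5 * d))" using assms by simp
  also have "\<dots> = exp 1 ^ (5 * d)" by (metis exp_of_nat_mult mult.right_neutral)
  also have "\<dots> \<le> 3 ^ (5 * d)" using exp_le by (intro power_mono) auto
  also have "\<dots> = 243 ^ d" by (simp add: power_mult)
  also have "\<dots> \<le> 625 ^ d" by (intro power_mono) auto
  also have "\<dots> = ((25::real) ^ 2) ^ d" by simp
  also have "\<dots> = (25 ^ d) ^ 2" by (simp only: power_mult[symmetric] mult.commute)
  finally show ?thesis by (rule power2_le_imp_le) simp
qed

definition fIJ :: "nat list \<Rightarrow> nat list \<Rightarrow> nat \<Rightarrow> nat" where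
  "fIJ I J x = the (map_of (zip I J) x)"

lemma fIJ_nth: "length I = length J \<Longrightarrow> distinct I \<Longrightarrow> k < length I \<Longrightarrow> fIJ I J (I ! k) = J ! k"
  unfolding fIJ_def by (simp add: map_of_zip_nth)

lemma set_nth_img: "set xs = (\<lambda>k. xs ! k) ` {..<length xs}"
  by (auto simp: set_conv_nth)

lemma fIJ_image:
  assumes "length I = length J" "distinct I"
  shows "fIJ I J ` set I = set J"
proof -
  have "fIJ I J ` set I = (\<lambda>k. fIJ I J (I ! k)) ` {..<length I}"
    by (subst set_nth_img) (simp add: image_image)
  also have "\<dots> = (\<lambda>k. J ! k) ` {..<length J}"
    using assms fIJ_nth by (intro image_cong) auto
  finally show ?thesis by (simp add: set_nth_img[symmetric])
qed

lemma fIJ_inj: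
  assumes "length I = length J" "distinct I" "distinct J"
  shows "inj_on (fIJ I J) (set I)"
proof (rule inj_onI)
  fix x y assume "x \<in> set I" "y \<in> set I" "fIJ I J x = fIJ I J y"
  moreover obtain k where k: "k < length I" "x = I ! k" using \<open>x \<in> set I\<close> by (auto simp: in_set_conv_nth)
  moreover obtain l where l: "l < length I" "y = I ! l" using \<open>y \<in> set I\<close> by (auto simp: in_set_conv_nth)
  ultimately have "J ! k = J ! l" using assms fIJ_nth by metis
  then have "k = l" using k l assms by (simp add: nth_eq_iff_index_eq)
  then show "x = y" using k l by simp
qed

lemma U_eq:
  assumes "is_umvirate_index n d I J"
  shows "umvirate n I J = {\<rho> \<in> Sym n. \<forall>x\<in>set I. \<rho> x = fIJ I J x}"
proof -
  have a: "length I = length J" "distinct I" using assms by (auto simp: is_umvirate_index_def)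
  have "(\<forall>k<length I. \<rho> (I ! k) = J ! k) \<longleftrightarrow> (\<forall>x\<in>set I. \<rho> x = fIJ I J x)" for \<rho>
  proof
    assume h: "\<forall>k<length I. \<rho> (I ! k) = J ! k"
    show "\<forall>x\<in>set I. \<rho> x = fIJ I J x"
    proof
      fix x assume "x \<in> set I"
      then obtain k where "k < length I" "x = I ! k" by (auto simp: in_set_conv_nth)
      then show "\<rho> x = fIJ I J x" using h a fIJ_nth by simp
    qed
  next
    assume h: "\<forall>x\<in>set I. \<rho> x = fIJ I J x"
    show "\<forall>k<length I. \<rho> (I ! k) = J ! k"
      using h a fIJ_nth by (metis nth_mem)
  qed
  then show ?thesis unfolding umvirate_def by blast
qed

lemma U_card:
  assumes "is_umvirate_index n d I J"
  shows "card (umvirate n I J) = fact (n - d)"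
proof -
  have a: "length I = d" "length J = d" "distinct I" "distinct J" "set I \<subseteq> {..<n}" "set J \<subseteq> {..<n}"
    using assms by (auto simp: is_umvirate_index_def)
  have "card {\<rho> \<in> Sym n. \<forall>x\<in>set I. \<rho> x = fIJ I J x} = fact (n - card (set I))"
    using a by (intro ext_count) (auto simp: fIJ_inj fIJ_image)
  then show ?thesis using U_eq[OF assms] a by (simp add: distinct_card)
qed

lemma T_card:
  assumes idx: "is_umvirate_index n d I J" and p: "p \<in> Sym n"
  shows "card {\<rho> \<in> Sym n. \<forall>k<d. p (\<rho> (I ! k)) = \<rho> (J ! k)}
     \<le> card (Phi n p (set I) (fIJ I J)) * fact (n - card (set I \<union> set J))"
proof -
  have a: "length I = d" "length J = d" "distinct I" "distinct J" "set I \<subseteq> {..<n}" "set J \<subseteq> {..<n}"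
    using idx by (auto simp: is_umvirate_index_def)
  define S where "S = set I \<union> set J"
  have Seq: "set I \<union> fIJ I J ` set I = S" using a by (simp add: fIJ_image S_def)
  have SS: "S \<subseteq> {..<n}" using a by (auto simp: S_def)
  define P where "P = Phi n p (set I) (fIJ I J)"
  define E where "E \<phi> = {\<rho> \<in> Sym n. \<forall>x\<in>S. \<rho> x = \<phi> x}" for \<phi>
  have finP: "finite P" unfolding P_def by (rule Phi_finite) simp
  have sub: "{\<rho> \<in> Sym n. \<forall>k<d. p (\<rho> (I ! k)) = \<rho> (J ! k)} \<subseteq> (\<Union>\<phi>\<in>P. E \<phi>)"
  proof
    fix \<rho> assume "\<rho> \<in> {\<rho> \<in> Sym n. \<forall>k<d. p (\<rho> (I ! k)) = \<rho> (J ! k)}"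
    then have \<rho>: "\<rho> permutes {..<n}" "\<forall>k<d. p (\<rho> (I ! k)) = \<rho> (J ! k)" by (auto simp: Sym_def)
    have "restrict \<rho> S \<in> P" unfolding P_def Phi_def Seq
    proof (intro CollectI conjI)
      have "\<forall>x\<in>S. \<rho> x \<in> {..<n}" using SS permutes_in_image[OF \<rho>(1)] by blast
      then show "restrict \<rho> S \<in> S \<rightarrow>\<^sub>E {..<n}" by (simp add: restrict_PiE_iff)
      have "inj_on \<rho> S" using permutes_inj[OF \<rho>(1)] by (rule inj_on_subset) simp
      then show "inj_on (restrict \<rho> S) S" by (rule inj_on_cong[THEN iffD1, rotated]) simp
      show "\<forall>x\<in>set I. p (restrict \<rho> S x) = restrict \<rho> S (fIJ I J x)"
      proof
        fix x assume "x \<in> set I"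
        then obtain k where k: "k < d" "x = I ! k" using a by (auto simp: in_set_conv_nth)
        then have "fIJ I J x = J ! k" using a fIJ_nth by simp
        moreover have "x \<in> S" "J ! k \<in> S" using k a by (auto simp: S_def)
        ultimately show "p (restrict \<rho> S x) = restrict \<rho> S (fIJ I J x)" using \<rho>(2) k by simp
      qed
    qed
    moreover have "\<rho> \<in> E (restrict \<rho> S)" using \<rho>(1) by (simp add: E_def Sym_def)
    ultimately show "\<rho> \<in> (\<Union>\<phi>\<in>P. E \<phi>)" by blast
  qed
  have cE: "card (E \<phi>) = fact (n - card S)" if "\<phi> \<in> P" for \<phi>
    unfolding E_def
  proof (rule ext_count[OF SS])
    have "\<phi> \<in> S \<rightarrow>\<^sub>E {..<n}" "inj_on \<phi> S" using that unfolding P_def Phi_def Seq by blast+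
    then show "inj_on \<phi> S" "\<phi> ` S \<subseteq> {..<n}" by (auto simp: PiE_iff)
  qed
  have finU: "finite (\<Union>\<phi>\<in>P. E \<phi>)" by (rule finite_subset[OF _ Sym_finite]) (auto simp: E_def)
  have "card {\<rho> \<in> Sym n. \<forall>k<d. p (\<rho> (I ! k)) = \<rho> (J ! k)} \<le> card (\<Union>\<phi>\<in>P. E \<phi>)"
    by (rule card_mono[OF finU sub])
  also have "\<dots> \<le> (\<Sum>\<phi>\<in>P. card (E \<phi>))" by (rule card_UN_le[OF finP])
  also have "\<dots> = card P * fact (n - card S)" using cE by simp
  finally show ?thesis by (simp add: P_def S_def)
qed

lemma conj_in_U:
  assumes t: "\<tau> \<in> Sym n" and p: "p \<in> Sym n" and idx: "is_umvirate_index n d I J"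
  shows "\<tau> \<circ> p \<circ> inv \<tau> \<in> umvirate n I J \<longleftrightarrow> (\<forall>k<d. p (inv \<tau> (I ! k)) = inv \<tau> (J ! k))"
proof -
  have len: "length I = d" using idx by (simp add: is_umvirate_index_def)
  have inS: "\<tau> \<circ> p \<circ> inv \<tau> \<in> Sym n" using t p Sym_comp Sym_inv by blast
  have bt: "bij \<tau>" using t Sym_bij by blast
  have "(\<tau> \<circ> p \<circ> inv \<tau>) x = y \<longleftrightarrow> p (inv \<tau> x) = inv \<tau> y" for x y
    using bij_inv_eq_iff[OF bt, of "p (inv \<tau> x)" y] by auto
  then show ?thesis unfolding umvirate_def using inS len by auto
qed

theorem lemma5p1:
  shows "\<exists>n0::nat. \<forall>n > n0. \<forall>(r::real) (A :: (nat \<Rightarrow> nat) set).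
     r \<ge> 25 \<longrightarrow> A \<subseteq> Sym n \<longrightarrow> conj_class n A \<longrightarrow> mu n A \<ge> exp (- real n) \<longrightarrow>
     (\<forall>p \<in> A. \<forall>l \<ge> 1. real (num_cycles n p l) \<le> (r / 2) ^ l) \<longrightarrow>
     r_global n r A"
proof (intro exI[of _ 0] allI impI)
  fix n :: nat and r :: real and A :: "(nat \<Rightarrow> nat) set"
  assume n: "n > 0" and r: "r \<ge> 25" and AS: "A \<subseteq> Sym n" and cc: "conj_class n A"
    and mu: "mu n A \<ge> exp (- real n)"
    and cyc: "\<forall>p \<in> A. \<forall>l \<ge> 1. real (num_cycles n p l) \<le> (r / 2) ^ l"
  obtain p where p: "p \<in> Sym n" "A = {s \<circ> p \<circ> inv s | s. s \<in> Sym n}"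
    using cc unfolding conj_class_def by blast
  have "id \<in> Sym n" by (simp add: Sym_def permutes_id)
  then have pA: "p \<in> A" using p(2) by force
  have cycp: "\<forall>l\<ge>1. real (num_cycles n p l) \<le> (r/2)^l" using cyc pA by blast
  have pp: "p permutes {..<n}" using p(1) by (simp add: Sym_def)
  show "r_global n r A" unfolding r_global_def
  proof (intro allI impI)
    fix d I J assume d: "d \<ge> 1" and idx: "is_umvirate_index n d I J"
    define U where "U = umvirate n I J"
    have cU: "card U = fact (n - d)" unfolding U_def by (rule U_card[OF idx])
    have finU: "finite U" unfolding U_def umvirate_def by (rule finite_subset[OF _ Sym_finite]) auto
    have mupos: "mu n A > 0" using mu by (metis exp_gt_zero less_le_trans)
    show "mu_U n I J A \<le> r ^ d * mu n A"
    proof (cases "2 * n \<le> 5 * d")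
      case True
      have "card (A \<inter> U) \<le> card U" using finU by (intro card_mono) auto
      then have le1: "mu_U n I J A \<le> 1" unfolding mu_U_def U_def[symmetric]
        by (cases "card U = 0") (auto simp: divide_le_eq_1)
      have "exp (real n) \<le> 25 ^ d" by (rule exp_le_25[OF True])
      also have "\<dots> \<le> r ^ d" using r by (intro power_mono) auto
      finally have e: "exp (real n) \<le> r ^ d" .
      have "1 = exp (real n) * exp (- real n)" by (simp add: exp_minus_inverse)
      also have "\<dots> \<le> r ^ d * mu n A" using e mu r by (intro mult_mono) auto
      finally show ?thesis using le1 by linarith
    next
      case False
      have a: "length I = d" "length J = d" "distinct I" "distinct J" "set I \<subseteq> {..<n}" "set J \<subseteq> {..<n}"
        using idx by (auto simp: is_umvirate_index_def)
      define T where "T = {\<rho> \<in> Sym n. \<forall>k<d. p (\<rho> (I ! k)) = \<rho> (J ! k)}"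
      define Q where "Q = {\<tau> \<in> Sym n. \<tau> \<circ> p \<circ> inv \<tau> \<in> A \<inter> U}"
      define z where "z = card {\<tau> \<in> Sym n. \<tau> \<circ> p \<circ> inv \<tau> = p}"
      have fib1: "card (A \<inter> U) * z = card Q" unfolding z_def Q_def
        by (rule fiber_count[OF p(1)]) (use p(2) in blast)
      have "{\<tau> \<in> Sym n. \<tau> \<circ> p \<circ> inv \<tau> \<in> A} = Sym n" using p(2) by blast
      then have fib2: "card A * z = fact n" using fiber_count[OF p(1), of A] p(2) card_Sym
        by (simp add: z_def)
      have QT: "T = inv ` Q"
      proof (intro set_eqI iffI)
        fix \<rho> assume "\<rho> \<in> T"
        then have \<rho>: "\<rho> \<in> Sym n" "\<forall>k<d. p (\<rho> (I ! k)) = \<rho> (J ! k)" by (auto simp: T_def)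
        have ii: "inv (inv \<rho>) = \<rho>" using Sym_bij[OF \<rho>(1)] by (simp add: inv_inv_eq)
        have "inv \<rho> \<in> Sym n" using Sym_inv[OF \<rho>(1)] .
        moreover have "inv \<rho> \<circ> p \<circ> inv (inv \<rho>) \<in> U"
          unfolding U_def using conj_in_U[OF Sym_inv[OF \<rho>(1)] p(1) idx] \<rho>(2) ii by simp
        moreover have "inv \<rho> \<circ> p \<circ> inv (inv \<rho>) \<in> A" using p(2) \<open>inv \<rho> \<in> Sym n\<close> by blast
        ultimately have "inv \<rho> \<in> Q" by (simp add: Q_def)
        then show "\<rho> \<in> inv ` Q" using ii by (metis image_eqI)
      next
        fix \<rho> assume "\<rho> \<in> inv ` Q"
        then obtain \<tau> where \<tau>: "\<tau> \<in> Sym n" "\<tau> \<circ> p \<circ> inv \<tau> \<in> U" "\<rho> = inv \<tau>" by (auto simp: Q_def)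
        then show "\<rho> \<in> T" using conj_in_U[OF \<tau>(1) p(1) idx] Sym_inv[OF \<tau>(1)] by (simp add: T_def U_def)
      qed
      have "inj_on inv Q"
      proof (rule inj_onI)
        fix x y assume "x \<in> Q" "y \<in> Q" "inv x = inv y"
        then show "x = y" using Sym_bij by (metis (no_types, lifting) Q_def inv_inv_eq mem_Collect_eq)
      qed
      then have cQT: "card T = card Q" using QT by (simp add: card_image)
      have key: "card (A \<inter> U) * fact n = card A * card T"
      proof -
        have "card (A \<inter> U) * fact n = card (A \<inter> U) * (card A * z)" using fib2 by simp
        also have "\<dots> = card A * (card (A \<inter> U) * z)" by (simp add: algebra_simps)
        finally show ?thesis using fib1 cQT by simp
      qed
      define D where "D = set I"
      define P where "P = Phi n p D (fIJ I J)"
      define s where "s = card (set I \<union> set J)"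
      have cD: "card D = d" using a by (simp add: D_def distinct_card)
      have SD: "D \<union> fIJ I J ` D = set I \<union> set J" using a by (simp add: D_def fIJ_image)
      have ds: "d \<le> s" unfolding s_def using cD[symmetric] by (simp add: D_def card_mono)
      have s2: "s \<le> 2 * d" unfolding s_def using card_Un_le[of "set I" "set J"] a by (simp add: distinct_card)
      have hT: "real (card T) \<le> real (card P) * fact (n - s)"
      proof -
        have "card T \<le> card P * fact (n - s)" using T_card[OF idx p(1)] by (simp add: T_def P_def D_def s_def)
        then show ?thesis by (metis of_nat_fact of_nat_le_iff of_nat_mult)
      qed
      have r1: "r \<ge> 1" using r by simp
      have hC: "real (card P) * r ^ (s - d) \<le> real n ^ (s - d) * r ^ d"
        using claim[OF pp r1 cycp, of D "fIJ I J"] fIJ_inj[of I J] a SD cD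
        by (simp add: P_def s_def D_def)
      have hF: "real n ^ (s - d) * fact (n - s) \<le> r ^ (s - d) * fact (n - d)"
        using arith_fact[OF r, of d "s - d" n] ds s2 False by simp
      have rpos: "r ^ (s - d) > 0" using r by simp
      have "r ^ (s - d) * real (card T) \<le> r ^ (s - d) * (real (card P) * fact (n - s))"
        using hT rpos by (intro mult_left_mono) auto
      also have "\<dots> = (real (card P) * r ^ (s - d)) * fact (n - s)" by (simp add: algebra_simps)
      also have "\<dots> \<le> (real n ^ (s - d) * r ^ d) * fact (n - s)" using hC by (intro mult_right_mono) auto
      also have "\<dots> = r ^ d * (real n ^ (s - d) * fact (n - s))" by (simp add: algebra_simps)
      also have "\<dots> \<le> r ^ d * (r ^ (s - d) * fact (n - d))" using hF r by (intro mult_left_mono) auto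
      also have "\<dots> = r ^ (s - d) * (r ^ d * fact (n - d))" by (simp add: algebra_simps)
      finally have tT: "real (card T) \<le> r ^ d * fact (n - d)" using rpos by simp
      have key': "real (card (A \<inter> U)) * fact n = real (card A) * real (card T)"
        using key by (metis of_nat_fact of_nat_mult)
      have "real (card (A \<inter> U)) * fact n \<le> real (card A) * (r ^ d * fact (n - d))"
        unfolding key' using tT by (intro mult_left_mono) auto
      moreover have "(fact n :: real) > 0" "(fact (n - d) :: real) > 0" by auto
      ultimately show ?thesis unfolding mu_U_def mu_def U_def[symmetric] cU
        by (simp add: field_simps)
    qed
  qed
qed

end
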